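(* Let $\mathcal{M}=(\mathcal{S},\mathcal{A},\mathcal{P},r,\gamma)$ be a finite MDP with $|\mathcal{S}|=S$, $|\mathcal{A}|=A$, $\gamma\in[0,1)$. Let $\mathcal{F}\subseteq\mathbb{R}^{SA}$ be closed, let $w\in\mathbb{R}^{SA}$ have strictly positive entries and $\|f\|_{w,1}:=\sum_{s,a}w(s,a)|f(s,a)|$. Let $\mu_0$ be a stationary policy and $f_0\in\mathcal{F}$ with $T_{\mu_0}f_0\geq f_0$. Let $(f_k)$, $(\mu_k)$ be generated by Reliable Policy Iteration with the norm $\|\cdot\|_{w,1}$: for $k=0,1,2,\dots$, $$f_{k+1}\in\arg\max_{f\in\mathcal{F}}\ \|f-f_k\|_{w,1}\quad\text{subject to}\quad T_{\mu_k} f\geq f\geq f_k,$$ and $\mu_{k+1}$ is a deterministic policy greedy with respect to $f_{k+1}$. Then for every $k\ge0$, $$f_{k+1}\in\arg\min_{f\in\mathcal{F}}\ \|f-Q_{\mu_k}\|_{w,1}\quad\text{subject to}\quad T_{\mu_k}f\geq f\geq f_k.$$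
   Context: Functions $\mathcal{S}\times\mathcal{A}\to\mathbb{R}$ are identified with vectors in $\mathbb{R}^{SA}$. A stationary policy is a map $\mu:\mathcal{S}\to\Delta(\mathcal{A})$; its Q-value function is $Q_\mu(s,a)=\mathbb{E}[\sum_{t\ge0}\gamma^t r(s_t,a_t)\mid s_0=s,a_0=a]$ with $s_{t+1}\sim\mathcal{P}(\cdot|s_t,a_t)$, $a_{t+1}\sim\mu(\cdot|s_{t+1})$. The Bellman operator is $T_\mu Q(s,a)=r(s,a)+\gamma\sum_{s',a'}\mathcal{P}(s'|s,a)\mu(a'|s')Q(s',a')$. A deterministic policy $\mu$ is greedy with respect to $f$ if $\mu(s)\in\arg\max_a f(s,a)$ for all $s$. Vector inequalities are coordinate-wise. *)

theory Defs
  imports "HOL-Analysis.Analysis"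
begin

text \<open>Q-functions are vectors
  in R^{SA}, represented as functions of type 's \<times> 'a \<Rightarrow> real (with the product
  topology, i.e. the Euclidean topology of R^{SA}). Transition kernel
  P s a s' = P(s'|s,a); a stationary policy mu s a = mu(a|s).\<close>

definition is_mdp :: "('s::finite \<Rightarrow> 'a::finite \<Rightarrow> 's \<Rightarrow> real) \<Rightarrow> real \<Rightarrow> bool" where
  "is_mdp P \<gamma> \<longleftrightarrow> (\<forall>s a s'. 0 \<le> P s a s') \<and> (\<forall>s a. (\<Sum>s'\<in>UNIV. P s a s') = 1)
     \<and> 0 \<le> \<gamma> \<and> \<gamma> < 1"

definition is_policy :: "('s::finite \<Rightarrow> 'a::finite \<Rightarrow> real) \<Rightarrow> bool" where
  "is_policy \<mu> \<longleftrightarrow> (\<forall>s a. 0 \<le> \<mu> s a) \<and> (\<forall>s. (\<Sum>a\<in>UNIV. \<mu> s a) = 1)"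

definition Pmu :: "('s::finite \<Rightarrow> 'a::finite \<Rightarrow> 's \<Rightarrow> real) \<Rightarrow> ('s \<Rightarrow> 'a \<Rightarrow> real)
    \<Rightarrow> ('s \<times> 'a \<Rightarrow> real) \<Rightarrow> ('s \<times> 'a \<Rightarrow> real)" where
  "Pmu P \<mu> g = (\<lambda>(s,a). \<Sum>s'\<in>UNIV. \<Sum>a'\<in>UNIV. P s a s' * \<mu> s' a' * g (s',a'))"

definition bellman :: "('s::finite \<Rightarrow> 'a::finite \<Rightarrow> 's \<Rightarrow> real) \<Rightarrow> ('s \<times> 'a \<Rightarrow> real) \<Rightarrow> real
    \<Rightarrow> ('s \<Rightarrow> 'a \<Rightarrow> real) \<Rightarrow> ('s \<times> 'a \<Rightarrow> real) \<Rightarrow> ('s \<times> 'a \<Rightarrow> real)" where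
  "bellman P r \<gamma> \<mu> Q = (\<lambda>sa. r sa + \<gamma> * Pmu P \<mu> Q sa)"

text \<open>Q-value function: Q_mu(s,a) = sum_t gamma^t E[r(s_t,a_t) | s_0=s, a_0=a],
  where E[r(s_t,a_t)|s_0=s,a_0=a] = (P_mu^t r)(s,a).\<close>
definition Qval :: "('s::finite \<Rightarrow> 'a::finite \<Rightarrow> 's \<Rightarrow> real) \<Rightarrow> ('s \<times> 'a \<Rightarrow> real) \<Rightarrow> real
    \<Rightarrow> ('s \<Rightarrow> 'a \<Rightarrow> real) \<Rightarrow> ('s \<times> 'a \<Rightarrow> real)" where
  "Qval P r \<gamma> \<mu> = (\<lambda>sa. \<Sum>t. \<gamma> ^ t * (Pmu P \<mu> ^^ t) r sa)"

definition wnorm1 :: "('s::finite \<times> 'a::finite \<Rightarrow> real) \<Rightarrow> ('s \<times> 'a \<Rightarrow> real) \<Rightarrow> real" where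
  "wnorm1 w f = (\<Sum>sa\<in>UNIV. w sa * \<bar>f sa\<bar>)"

definition greedy_det :: "('s::finite \<Rightarrow> 'a::finite \<Rightarrow> real) \<Rightarrow> ('s \<times> 'a \<Rightarrow> real) \<Rightarrow> bool" where
  "greedy_det \<mu> f \<longleftrightarrow> (\<exists>d::'s \<Rightarrow> 'a.
      (\<forall>s a. \<mu> s a = (if a = d s then 1 else 0)) \<and> (\<forall>s a. f (s,a) \<le> f (s, d s)))"

end

theory Submission
  imports Defs
begin

lemma Pmu_add: "Pmu P m (\<lambda>x. a x + b x) = (\<lambda>x. Pmu P m a x + Pmu P m b x)"
  by (rule ext) (auto simp: Pmu_def distrib_left sum.distrib)

lemma Pmu_scale: "Pmu P m (\<lambda>x. c * a x) = (\<lambda>x. c * Pmu P m a x)"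
  by (rule ext) (auto simp: Pmu_def sum_distrib_left mult_ac)

lemma Pmu_mono:
  assumes "is_mdp P g" "is_policy m" "a \<le> b"
  shows "Pmu P m a \<le> Pmu P m b"
proof -
  have "\<And>s x s' x'. P s x s' * m s' x' * a (s',x') \<le> P s x s' * m s' x' * b (s',x')"
    using assms by (intro mult_left_mono) (auto simp: is_mdp_def is_policy_def le_fun_def)
  then show ?thesis unfolding le_fun_def Pmu_def by (auto intro!: sum_mono)
qed

lemma Pmu_bound:
  assumes "is_mdp P g" "is_policy m" "\<forall>y. \<bar>a y\<bar> \<le> B"
  shows "\<bar>Pmu P m a x\<bar> \<le> B"
proof -
  obtain s t where x: "x = (s,t)" by (cases x)
  have "\<bar>Pmu P m a x\<bar> \<le> (\<Sum>s'\<in>UNIV. \<Sum>a'\<in>UNIV. \<bar>P s t s' * m s' a' * a (s',a')\<bar>)"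
    unfolding x Pmu_def by (auto intro!: order_trans[OF sum_abs] sum_mono)
  also have "\<dots> \<le> (\<Sum>s'\<in>UNIV. \<Sum>a'\<in>UNIV. P s t s' * m s' a' * B)"
    using assms by (intro sum_mono) (auto simp: is_mdp_def is_policy_def abs_mult intro!: mult_left_mono)
  also have "\<dots> = (\<Sum>s'\<in>UNIV. P s t s' * (\<Sum>a'\<in>UNIV. m s' a') * B)"
    by (simp add: sum_distrib_left sum_distrib_right mult_ac)
  also have "\<dots> = B" using assms by (simp add: is_mdp_def is_policy_def flip: sum_distrib_right)
  finally show ?thesis .
qed

lemma Pmu_pow_add: "(Pmu P m ^^ n) (\<lambda>x. a x + b x) = (\<lambda>x. (Pmu P m ^^ n) a x + (Pmu P m ^^ n) b x)"
  by (induction n) (auto simp: Pmu_add)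

lemma Pmu_pow_scale: "(Pmu P m ^^ n) (\<lambda>x. c * a x) = (\<lambda>x. c * (Pmu P m ^^ n) a x)"
  by (induction n) (auto simp: Pmu_scale)

lemma Pmu_pow_mono:
  assumes "is_mdp P g" "is_policy m" "a \<le> b"
  shows "(Pmu P m ^^ n) a \<le> (Pmu P m ^^ n) b"
  using assms by (induction n) (auto intro: Pmu_mono)

lemma Pmu_pow_bound:
  assumes "is_mdp P g" "is_policy m" "\<forall>y. \<bar>a y\<bar> \<le> B"
  shows "\<bar>(Pmu P m ^^ n) a x\<bar> \<le> B"
  using assms by (induction n arbitrary: x) (auto intro: Pmu_bound)

lemma sub_Qval:
  assumes mdp: "is_mdp P \<gamma>" and pol: "is_policy m"
    and sub: "g \<le> bellman P r \<gamma> m g"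
  shows "g \<le> Qval P r \<gamma> m"
proof -
  define M where "M = Pmu P m"
  define S where "S n = (\<lambda>x. \<Sum>t<n. \<gamma> ^ t * (M ^^ t) r x)" for n
  have it: "g \<le> (\<lambda>x. S n x + \<gamma>^n * (M ^^ n) g x)" for n
  proof (induction n)
    case 0 then show ?case by (simp add: S_def le_fun_def)
  next
    case (Suc n)
    have sub': "g \<le> (\<lambda>x. r x + \<gamma> * M g x)" using sub by (simp add: bellman_def M_def)
    have "(M ^^ n) g \<le> (M ^^ n) (\<lambda>x. r x + \<gamma> * M g x)"
      using sub' unfolding M_def by (rule Pmu_pow_mono[OF mdp pol])
    also have "\<dots> = (\<lambda>x. (M ^^ n) r x + \<gamma> * (M ^^ Suc n) g x)"
      unfolding M_def Pmu_pow_add Pmu_pow_scale by (simp add: funpow_Suc_right del: funpow.simps)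
    finally have h: "(M ^^ n) g \<le> \<dots>" .
    have "0 \<le> \<gamma>^n" using mdp by (simp add: is_mdp_def)
    with h have "\<And>x. \<gamma>^n * (M ^^ n) g x \<le> \<gamma>^n * ((M ^^ n) r x + \<gamma> * (M ^^ Suc n) g x)"
      by (intro mult_left_mono) (auto simp: le_fun_def)
    have SS: "S (Suc n) x = S n x + \<gamma>^n * (M ^^ n) r x" for x by (simp add: S_def)
    show ?case unfolding le_fun_def
    proof
      fix x
      have a: "g x \<le> S n x + \<gamma>^n * (M ^^ n) g x" using le_funD[OF Suc, of x] by simp
      have b: "\<gamma>^n * (M ^^ n) g x \<le> \<gamma>^n * (M ^^ n) r x + \<gamma>^Suc n * (M ^^ Suc n) g x"
      proof -
        have e: "\<gamma>^n * ((M ^^ n) r x + \<gamma> * (M ^^ Suc n) g x) = \<gamma>^n * (M ^^ n) r x + \<gamma>^Suc n * (M ^^ Suc n) g x"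
          by (simp only: distrib_left power_Suc mult.assoc mult.left_commute[of "\<gamma>^n" \<gamma>])
        show ?thesis using \<open>\<And>x. \<gamma>^n * (M ^^ n) g x \<le> _\<close>[of x] unfolding e .
      qed
      show "g x \<le> S (Suc n) x + \<gamma>^Suc n * (M ^^ Suc n) g x"
        unfolding SS using a b by linarith
    qed
  qed
  have Br: "\<forall>y. \<bar>r y\<bar> \<le> (\<Sum>z\<in>UNIV. \<bar>r z\<bar>)" by (auto intro: member_le_sum)
  have Bg: "\<forall>y. \<bar>g y\<bar> \<le> (\<Sum>z\<in>UNIV. \<bar>g z\<bar>)" by (auto intro: member_le_sum)
  have g0: "0 \<le> \<gamma>" "\<gamma> < 1" using mdp by (auto simp: is_mdp_def)
  show ?thesis unfolding le_fun_def
  proof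
    fix x
    have summ: "summable (\<lambda>t. \<gamma> ^ t * (M ^^ t) r x)"
    proof (rule summable_comparison_test'[where g = "\<lambda>t. (\<Sum>z\<in>UNIV. \<bar>r z\<bar>) * \<gamma>^t"])
      show "summable (\<lambda>t. (\<Sum>z\<in>UNIV. \<bar>r z\<bar>) * \<gamma>^t)" using g0 by (intro summable_mult summable_geometric) auto
      fix t
      have "\<bar>(M ^^ t) r x\<bar> \<le> (\<Sum>z\<in>UNIV. \<bar>r z\<bar>)" unfolding M_def by (rule Pmu_pow_bound[OF mdp pol Br])
      then show "norm (\<gamma> ^ t * (M ^^ t) r x) \<le> (\<Sum>z\<in>UNIV. \<bar>r z\<bar>) * \<gamma>^t"
        using g0 by (simp add: abs_mult mult_left_mono mult.commute)
    qed
    have l1: "(\<lambda>n. S n x) \<longlonglongrightarrow> Qval P r \<gamma> m x"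
      unfolding S_def Qval_def M_def[symmetric] using summ by (simp add: summable_LIMSEQ)
    have l2: "(\<lambda>n. \<gamma>^n * (M ^^ n) g x) \<longlonglongrightarrow> 0"
    proof (rule Lim_null_comparison[where g = "\<lambda>n. (\<Sum>z\<in>UNIV. \<bar>g z\<bar>) * \<gamma>^n"])
      show "(\<lambda>n. (\<Sum>z\<in>UNIV. \<bar>g z\<bar>) * \<gamma>^n) \<longlonglongrightarrow> 0" using g0
        by (intro tendsto_mult_right_zero LIMSEQ_power_zero) auto
      show "\<forall>\<^sub>F n in sequentially. norm (\<gamma>^n * (M ^^ n) g x) \<le> (\<Sum>z\<in>UNIV. \<bar>g z\<bar>) * \<gamma>^n"
      proof (intro always_eventually allI)
        fix n
        have "\<bar>(M ^^ n) g x\<bar> \<le> (\<Sum>z\<in>UNIV. \<bar>g z\<bar>)" unfolding M_def by (rule Pmu_pow_bound[OF mdp pol Bg])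
        then show "norm (\<gamma>^n * (M ^^ n) g x) \<le> (\<Sum>z\<in>UNIV. \<bar>g z\<bar>) * \<gamma>^n"
          using g0 by (simp add: abs_mult mult_left_mono mult.commute)
      qed
    qed
    have lim: "(\<lambda>n. S n x + \<gamma>^n * (M ^^ n) g x) \<longlonglongrightarrow> Qval P r \<gamma> m x"
      using tendsto_add[OF l1 l2] by simp
    show "g x \<le> Qval P r \<gamma> m x"
    proof (rule LIMSEQ_le_const[of _ _ "g x"])
      show "\<exists>N. \<forall>n\<ge>N. g x \<le> S n x + \<gamma> ^ n * (M ^^ n) g x"
        using le_funD[OF it, of x] by blast
    qed (rule lim)
  qed
qed

lemma greedy_policy: "greedy_det m f \<Longrightarrow> is_policy m"
  unfolding greedy_det_def is_policy_def by auto

lemma wnorm_split: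
  assumes "\<forall>sa. 0 < w sa" "a \<le> h" "h \<le> q"
  shows "wnorm1 w (h - q) = wnorm1 w (q - a) - wnorm1 w (h - a)"
proof -
  have p: "a sa \<le> h sa" "h sa \<le> q sa" for sa
    using le_funD[OF assms(2), of sa] le_funD[OF assms(3), of sa] by simp_all
  have "wnorm1 w (h - q) = (\<Sum>sa\<in>UNIV. w sa * (q sa - a sa) - w sa * (h sa - a sa))"
    unfolding wnorm1_def
  proof (intro sum.cong refl)
    fix sa
    have "\<bar>(h - q) sa\<bar> = q sa - h sa" using p[of sa] by (simp add: abs_of_nonpos)
    moreover have "w sa * (q sa - a sa) - w sa * (h sa - a sa) = w sa * (q sa - h sa)"
      by (simp only: right_diff_distrib diff_diff_eq2 diff_add_cancel add_diff_cancel_right)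
    ultimately show "w sa * \<bar>(h - q) sa\<bar> = w sa * (q sa - a sa) - w sa * (h sa - a sa)"
      by simp
  qed
  also have "\<dots> = wnorm1 w (q - a) - wnorm1 w (h - a)"
  proof -
    have e1: "\<bar>(q - a) sa\<bar> = q sa - a sa" for sa using p[of sa] by simp
    have e2: "\<bar>(h - a) sa\<bar> = h sa - a sa" for sa using p[of sa] by simp
    show ?thesis unfolding wnorm1_def sum_subtractf e1 e2 ..
  qed
  finally show ?thesis .
qed

theorem theorem3:
  fixes P :: "'s::finite \<Rightarrow> 'a::finite \<Rightarrow> 's \<Rightarrow> real"
    and r :: "'s \<times> 'a \<Rightarrow> real" and \<gamma> :: real
    and F :: "('s \<times> 'a \<Rightarrow> real) set"
    and w :: "'s \<times> 'a \<Rightarrow> real"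
    and f :: "nat \<Rightarrow> 's \<times> 'a \<Rightarrow> real"
    and \<mu> :: "nat \<Rightarrow> 's \<Rightarrow> 'a \<Rightarrow> real"
  assumes mdp: "is_mdp P \<gamma>"
    and closedF: "closed F"
    and wpos: "\<forall>sa. 0 < w sa"
    and mu0: "is_policy (\<mu> 0)"
    and f0: "f 0 \<in> F"
    and init: "f 0 \<le> bellman P r \<gamma> (\<mu> 0) (f 0)"
    and rpi: "\<forall>k. f (Suc k) \<in> F
              \<and> f (Suc k) \<le> bellman P r \<gamma> (\<mu> k) (f (Suc k)) \<and> f k \<le> f (Suc k)
              \<and> (\<forall>g\<in>F. g \<le> bellman P r \<gamma> (\<mu> k) g \<and> f k \<le> g
                   \<longrightarrow> wnorm1 w (g - f k) \<le> wnorm1 w (f (Suc k) - f k))"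
    and greedy: "\<forall>k. greedy_det (\<mu> (Suc k)) (f (Suc k))"
  shows "\<forall>k. f (Suc k) \<in> F
              \<and> f (Suc k) \<le> bellman P r \<gamma> (\<mu> k) (f (Suc k)) \<and> f k \<le> f (Suc k)
              \<and> (\<forall>g\<in>F. g \<le> bellman P r \<gamma> (\<mu> k) g \<and> f k \<le> g
                   \<longrightarrow> wnorm1 w (f (Suc k) - Qval P r \<gamma> (\<mu> k))
                       \<le> wnorm1 w (g - Qval P r \<gamma> (\<mu> k)))"
proof (intro allI conjI ballI impI)
  fix k
  have pol: "is_policy (\<mu> k)"
  proof (cases k)
    case 0 then show ?thesis using mu0 by simp
  next
    case (Suc j) then show ?thesis using greedy_policy spec[OF greedy, of j] by simp
  qed
  note R = spec[OF rpi, of k]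
  note R1 = conjunct1[OF R]
  note R2 = conjunct1[OF conjunct2[OF R]]
  note R3 = conjunct1[OF conjunct2[OF conjunct2[OF R]]]
  note R4 = conjunct2[OF conjunct2[OF conjunct2[OF R]]]
  show "f (Suc k) \<in> F" "f (Suc k) \<le> bellman P r \<gamma> (\<mu> k) (f (Suc k))" "f k \<le> f (Suc k)"
    by (rule R1, rule R2, rule R3)
  fix g assume g: "g \<in> F" "g \<le> bellman P r \<gamma> (\<mu> k) g \<and> f k \<le> g"
  have gq: "g \<le> Qval P r \<gamma> (\<mu> k)" using sub_Qval[OF mdp pol] conjunct1[OF g(2)] .
  have fq: "f (Suc k) \<le> Qval P r \<gamma> (\<mu> k)" using sub_Qval[OF mdp pol R2] .
  have le: "wnorm1 w (g - f k) \<le> wnorm1 w (f (Suc k) - f k)" using bspec[OF R4 g(1)] g(2) by (rule mp)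
  show "wnorm1 w (f (Suc k) - Qval P r \<gamma> (\<mu> k)) \<le> wnorm1 w (g - Qval P r \<gamma> (\<mu> k))"
  proof -
    have e1: "wnorm1 w (g - Qval P r \<gamma> (\<mu> k)) = wnorm1 w (Qval P r \<gamma> (\<mu> k) - f k) - wnorm1 w (g - f k)"
      by (rule wnorm_split[OF wpos conjunct2[OF g(2)] gq])
    note fk = R3
    have e2: "wnorm1 w (f (Suc k) - Qval P r \<gamma> (\<mu> k)) = wnorm1 w (Qval P r \<gamma> (\<mu> k) - f k) - wnorm1 w (f (Suc k) - f k)"
      by (rule wnorm_split[OF wpos fk fq])
    show ?thesis unfolding e1 e2 using le by linarith
  qed
qed

end
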